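(* Let $(B_a)_{a\in A}$ be a polynomial and $S:=\sum_{a\in A}\mathcal P(B_a)$. If $H((B_a)_{a\in A})$ is a set, then $H((B_a)_{a\in A})$ with the structure $s(a,f)=\{f(b)\mid b\in B_a\}$ is an initial algebra for the polynomial $(B_a)_{a\in A}$ together with the family of all image preserving equations with variable set $S$.
   Context: Work in $\mathbf{ZF}$. A polynomial is a set $A$ with a family of sets $(B_a)_{a\in A}$; an algebra is a set $X$ with $s:\sum_{a\in A}X^{B_a}\to X$; a homomorphism $(X,s)\to(Y,t)$ is $h:X\to Y$ with $h(s(a,f))=t(a,h\circ f)$. An image preserving equation is a tuple $(V,a,b,l,r)$ with $V$ a set, $a,b\in A$, $l:B_a\to V$, $r:B_b\to V$ having the same image; an algebra $(X,s)$ satisfies it if $s(a,h\circ l)=s(b,h\circ r)$ for all $h:V\to X$. The family of all image preserving equations with variable set $S$ is indexed by the set of all tuples $(a,b,l,r)$ with $l:B_a\to S$, $r:B_b\to S$ of equal image, each with $V=S$. A set $X$ is small relative to $(B_a)_{a\in A}$ if some $B_a$ surjects onto $X$; hereditarily small if it is small and all its elements are hereditarily small. $H((B_a)_{a\in A})$ is the class of hereditarily small sets. *)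

theory Defs
  imports "HOL-Library.FuncSet"
begin

text \<open>A model of ZF set theory inside HOL: the type 'v is the universe of sets,
  and elts x is the collection of elements of the set x.\<close>

definition zf_universe :: "('v \<Rightarrow> 'v set) \<Rightarrow> bool" where
  "zf_universe elts \<longleftrightarrow>
     inj elts
   \<and> wf {(x, y). x \<in> elts y}
   \<and> (\<forall>x (f :: 'v \<Rightarrow> 'v). \<exists>y. elts y = f ` elts x)
   \<and> (\<forall>x. \<exists>y. elts y = \<Union> (elts ` elts x))
   \<and> (\<forall>x. \<exists>y. elts y = {z. elts z \<subseteq> elts x})
   \<and> (\<exists>y. elts y = {})
   \<and> (\<exists>y. (\<exists>e\<in>elts y. elts e = {}) \<and> (\<forall>x\<in>elts y. \<exists>z\<in>elts y. elts z = insert x (elts x)))"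

definition small_rel :: "('v \<Rightarrow> 'v set) \<Rightarrow> 'v \<Rightarrow> ('v \<Rightarrow> 'v) \<Rightarrow> 'v \<Rightarrow> bool" where
  "small_rel elts A B x \<longleftrightarrow> (\<exists>a\<in>elts A. \<exists>f. f \<in> elts (B a) \<rightarrow> elts x \<and> f ` elts (B a) = elts x)"

inductive hsmall :: "('v \<Rightarrow> 'v set) \<Rightarrow> 'v \<Rightarrow> ('v \<Rightarrow> 'v) \<Rightarrow> 'v \<Rightarrow> bool"
  for elts A B where
  "small_rel elts A B x \<Longrightarrow> (\<And>y. y \<in> elts x \<Longrightarrow> hsmall elts A B y) \<Longrightarrow> hsmall elts A B x"

definition is_alg :: "('v \<Rightarrow> 'v set) \<Rightarrow> 'v \<Rightarrow> ('v \<Rightarrow> 'v) \<Rightarrow> 'v \<Rightarrow> ('v \<Rightarrow> ('v \<Rightarrow> 'v) \<Rightarrow> 'v) \<Rightarrow> bool" where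
  "is_alg elts A B X s \<longleftrightarrow> (\<forall>a\<in>elts A. \<forall>f\<in>elts (B a) \<rightarrow>\<^sub>E elts X. s a f \<in> elts X)"

definition is_hom :: "('v \<Rightarrow> 'v set) \<Rightarrow> 'v \<Rightarrow> ('v \<Rightarrow> 'v) \<Rightarrow> 'v \<Rightarrow> ('v \<Rightarrow> ('v \<Rightarrow> 'v) \<Rightarrow> 'v)
      \<Rightarrow> 'v \<Rightarrow> ('v \<Rightarrow> ('v \<Rightarrow> 'v) \<Rightarrow> 'v) \<Rightarrow> ('v \<Rightarrow> 'v) \<Rightarrow> bool" where
  "is_hom elts A B X s Y t h \<longleftrightarrow> h \<in> elts X \<rightarrow>\<^sub>E elts Y \<and>
     (\<forall>a\<in>elts A. \<forall>f\<in>elts (B a) \<rightarrow>\<^sub>E elts X. h (s a f) = t a (compose (elts (B a)) h f))"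

definition ip_equation :: "('v \<Rightarrow> 'v set) \<Rightarrow> 'v \<Rightarrow> ('v \<Rightarrow> 'v) \<Rightarrow> 'w set \<Rightarrow> 'v \<Rightarrow> 'v \<Rightarrow> ('v \<Rightarrow> 'w) \<Rightarrow> ('v \<Rightarrow> 'w) \<Rightarrow> bool" where
  "ip_equation elts A B V a b l r \<longleftrightarrow> a \<in> elts A \<and> b \<in> elts A \<and>
     l \<in> elts (B a) \<rightarrow>\<^sub>E V \<and> r \<in> elts (B b) \<rightarrow>\<^sub>E V \<and> l ` elts (B a) = r ` elts (B b)"

definition satisfies_eq :: "('v \<Rightarrow> 'v set) \<Rightarrow> ('v \<Rightarrow> 'v) \<Rightarrow> 'v \<Rightarrow> ('v \<Rightarrow> ('v \<Rightarrow> 'v) \<Rightarrow> 'v)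
      \<Rightarrow> 'w set \<Rightarrow> 'v \<Rightarrow> 'v \<Rightarrow> ('v \<Rightarrow> 'w) \<Rightarrow> ('v \<Rightarrow> 'w) \<Rightarrow> bool" where
  "satisfies_eq elts B X s V a b l r \<longleftrightarrow>
     (\<forall>h\<in>V \<rightarrow> elts X. s a (compose (elts (B a)) h l) = s b (compose (elts (B b)) h r))"

definition all_ip_equations :: "('v \<Rightarrow> 'v set) \<Rightarrow> 'v \<Rightarrow> ('v \<Rightarrow> 'v) \<Rightarrow> 'w set
      \<Rightarrow> ('v \<times> 'v \<times> ('v \<Rightarrow> 'w) \<times> ('v \<Rightarrow> 'w)) set" where
  "all_ip_equations elts A B V = {(a, b, l, r). ip_equation elts A B V a b l r}"

definition satisfies_all :: "('v \<Rightarrow> 'v set) \<Rightarrow> ('v \<Rightarrow> 'v) \<Rightarrow> 'v \<Rightarrow> ('v \<Rightarrow> ('v \<Rightarrow> 'v) \<Rightarrow> 'v)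
      \<Rightarrow> 'w set \<Rightarrow> ('v \<times> 'v \<times> ('v \<Rightarrow> 'w) \<times> ('v \<Rightarrow> 'w)) set \<Rightarrow> bool" where
  "satisfies_all elts B X s V E \<longleftrightarrow> (\<forall>(a, b, l, r)\<in>E. satisfies_eq elts B X s V a b l r)"

definition initial_alg :: "('v \<Rightarrow> 'v set) \<Rightarrow> 'v \<Rightarrow> ('v \<Rightarrow> 'v) \<Rightarrow> 'w set
      \<Rightarrow> ('v \<times> 'v \<times> ('v \<Rightarrow> 'w) \<times> ('v \<Rightarrow> 'w)) set \<Rightarrow> 'v \<Rightarrow> ('v \<Rightarrow> ('v \<Rightarrow> 'v) \<Rightarrow> 'v) \<Rightarrow> bool" where
  "initial_alg elts A B V E X s \<longleftrightarrow>
     is_alg elts A B X s \<and> satisfies_all elts B X s V E \<and>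
     (\<forall>Y t. is_alg elts A B Y t \<and> satisfies_all elts B Y t V E \<longrightarrow>
        (\<exists>!h. is_hom elts A B X s Y t h))"

definition img_struct :: "('v \<Rightarrow> 'v set) \<Rightarrow> ('v \<Rightarrow> 'v) \<Rightarrow> 'v \<Rightarrow> ('v \<Rightarrow> 'v) \<Rightarrow> 'v" where
  "img_struct elts B a f = (THE y. elts y = f ` elts (B a))"

end

theory Submission
  imports Defs
begin

lemma zf_inj: "zf_universe elts \<Longrightarrow> inj elts" unfolding zf_universe_def by (elim conjE)
lemma zf_wf: "zf_universe elts \<Longrightarrow> wf {(x, y). x \<in> elts y}" unfolding zf_universe_def by (elim conjE)

lemma zf_repl:
  fixes elts :: "'v \<Rightarrow> 'v set" and f :: "'v \<Rightarrow> 'v"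
  assumes "zf_universe elts"
  shows "\<exists>y. elts y = f ` elts x"
proof -
  have "\<forall>x (f :: 'v \<Rightarrow> 'v). \<exists>y. elts y = f ` elts x"
    using assms unfolding zf_universe_def by (elim conjE)
  thus ?thesis by blast
qed

lemma hs_cases: "hsmall elts A B x \<Longrightarrow> small_rel elts A B x \<and> (\<forall>y\<in>elts x. hsmall elts A B y)"
  by (erule hsmall.cases) auto

lemma img_elts:
  assumes "zf_universe elts"
  shows "elts (img_struct elts B a f) = f ` elts (B a)"
proof -
  from zf_repl[OF assms] obtain y where y: "elts y = f ` elts (B a)" by blast
  from assms have inj: "inj elts" by (rule zf_inj)
  have "(THE y. elts y = f ` elts (B a)) = y"
  proof (rule the_equality)
    show "elts y = f ` elts (B a)" by (rule y)
    fix z assume "elts z = f ` elts (B a)"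
    hence "elts z = elts y" using y by simp
    thus "z = y" using inj by (simp add: inj_eq)
  qed
  thus ?thesis using y unfolding img_struct_def by simp
qed

lemma wd:
  fixes elts :: "'v \<Rightarrow> 'v set" and A :: 'v and B :: "'v \<Rightarrow> 'v"
  defines "V \<equiv> (SIGMA a:elts A. Pow (elts (B a)))"
  assumes alg: "is_alg elts A B Y t"
    and sat: "satisfies_all elts B Y t V (all_ip_equations elts A B V)"
    and a: "a \<in> elts A" and b: "b \<in> elts A"
    and f: "f \<in> elts (B a) \<rightarrow> X" "f ` elts (B a) = X"
    and f': "f' \<in> elts (B b) \<rightarrow> X" "f' ` elts (B b) = X"
    and g: "g \<in> X \<rightarrow> elts Y"
  shows "t a (compose (elts (B a)) g f) = t b (compose (elts (B b)) g f')"
proof -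
  have "\<exists>y0. y0 \<in> elts Y"
  proof (cases "elts (B a) = {}")
    case True
    hence "(\<lambda>_. undefined) \<in> elts (B a) \<rightarrow>\<^sub>E elts Y" by auto
    hence "t a (\<lambda>_. undefined) \<in> elts Y" using alg a unfolding is_alg_def by blast
    thus ?thesis by blast
  next
    case False
    then obtain \<beta> where "\<beta> \<in> elts (B a)" by blast
    hence "g (f \<beta>) \<in> elts Y" using f g by blast
    thus ?thesis by blast
  qed
  then obtain y0 where y0: "y0 \<in> elts Y" by blast
  define pre where "pre y = {\<gamma> \<in> elts (B a). f \<gamma> = y}" for y
  define l where "l = restrict (\<lambda>\<beta>. (a, pre (f \<beta>))) (elts (B a))"
  define r where "r = restrict (\<lambda>\<beta>. (a, pre (f' \<beta>))) (elts (B b))"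
  define k where "k p = (if fst p = a \<and> snd p \<noteq> {} then g (f (SOME \<beta>. \<beta> \<in> snd p)) else y0)" for p
  have lE: "l \<in> elts (B a) \<rightarrow>\<^sub>E V" unfolding l_def V_def pre_def using a by auto
  have rE: "r \<in> elts (B b) \<rightarrow>\<^sub>E V" unfolding r_def V_def pre_def using a by auto
  have "l ` elts (B a) = (\<lambda>y. (a, pre y)) ` X" unfolding l_def using f(2) by auto
  moreover have "r ` elts (B b) = (\<lambda>y. (a, pre y)) ` X" unfolding r_def using f'(2) by auto
  ultimately have img: "l ` elts (B a) = r ` elts (B b)" by simp
  have "(a, b, l, r) \<in> all_ip_equations elts A B V"
    unfolding all_ip_equations_def ip_equation_def using a b lE rE img by auto
  hence eq: "satisfies_eq elts B Y t V a b l r" using sat unfolding satisfies_all_def by blast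
  have kV: "k \<in> V \<rightarrow> elts Y"
  proof
    fix p assume p: "p \<in> V"
    show "k p \<in> elts Y"
    proof (cases "fst p = a \<and> snd p \<noteq> {}")
      case True
      hence "(SOME \<beta>. \<beta> \<in> snd p) \<in> snd p" by (metis some_in_eq)
      moreover have "snd p \<subseteq> elts (B a)" using p True unfolding V_def by auto
      ultimately have "f (SOME \<beta>. \<beta> \<in> snd p) \<in> X" using f by blast
      thus ?thesis using True g unfolding k_def by auto
    qed (auto simp: k_def y0)
  qed
  have kpre: "k (a, pre y) = g y" if "y \<in> X" for y
  proof -
    from that f(2) obtain \<beta> where "\<beta> \<in> elts (B a)" "f \<beta> = y" by blast
    hence ne: "pre y \<noteq> {}" unfolding pre_def by blast
    hence "(SOME \<beta>. \<beta> \<in> pre y) \<in> pre y" by (metis some_in_eq)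
    hence "f (SOME \<beta>. \<beta> \<in> pre y) = y" unfolding pre_def by blast
    thus ?thesis using ne unfolding k_def by simp
  qed
  have c1: "compose (elts (B a)) k l = compose (elts (B a)) g f"
    unfolding compose_def l_def using kpre f(1) by (auto intro!: restrict_ext simp: Pi_iff)
  have c2: "compose (elts (B b)) k r = compose (elts (B b)) g f'"
    unfolding compose_def r_def using kpre f'(1) by (auto intro!: restrict_ext simp: Pi_iff)
  have "t a (compose (elts (B a)) k l) = t b (compose (elts (B b)) k r)"
    using eq kV unfolding satisfies_eq_def by blast
  thus ?thesis by (simp only: c1 c2)
qed

theorem mainTheorem4:
  fixes elts :: "'v \<Rightarrow> 'v set" and A :: 'v and B :: "'v \<Rightarrow> 'v" and H :: 'v
  assumes "zf_universe elts"
    and "elts H = {x. hsmall elts A B x}"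
  shows "initial_alg elts A B (SIGMA a:elts A. Pow (elts (B a)))
           (all_ip_equations elts A B (SIGMA a:elts A. Pow (elts (B a))))
           H (img_struct elts B)"
  (is "initial_alg elts A B ?V ?E H ?s")
proof -
  note zf = assms(1)
  have inj: "inj elts" using zf by (rule zf_inj)
  have wfR: "wf {(x, y). x \<in> elts y}" using zf by (rule zf_wf)
  have Hiff: "x \<in> elts H \<longleftrightarrow> hsmall elts A B x" for x using assms(2) by blast
  have sH: "?s a f \<in> elts H" if a: "a \<in> elts A" and f: "f \<in> elts (B a) \<rightarrow> elts H" for a f
  proof -
    have e: "elts (?s a f) = f ` elts (B a)" by (rule img_elts[OF zf])
    have "small_rel elts A B (?s a f)" unfolding small_rel_def
      by (rule bexI[OF exI[of _ f] a]) (use e in auto)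
    moreover have "hsmall elts A B y" if "y \<in> elts (?s a f)" for y
      using that e f Hiff by auto
    ultimately have "hsmall elts A B (?s a f)" by (rule hsmall.intros)
    thus ?thesis using Hiff by simp
  qed
  have alg: "is_alg elts A B H ?s" unfolding is_alg_def using sH by blast
  have sat: "satisfies_all elts B H ?s ?V ?E"
    unfolding satisfies_all_def
  proof (clarify)
    fix a b l r assume "(a, b, l, r) \<in> ?E"
    hence ip: "ip_equation elts A B ?V a b l r" unfolding all_ip_equations_def by simp
    show "satisfies_eq elts B H ?s ?V a b l r"
      unfolding satisfies_eq_def
    proof
      fix h assume "h \<in> ?V \<rightarrow> elts H"
      have "elts (?s a (compose (elts (B a)) h l)) = h ` (l ` elts (B a))"
        by (simp add: img_elts[OF zf] compose_def image_image)
      moreover have "elts (?s b (compose (elts (B b)) h r)) = h ` (r ` elts (B b))"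
        by (simp add: img_elts[OF zf] compose_def image_image)
      moreover have "l ` elts (B a) = r ` elts (B b)" using ip unfolding ip_equation_def by blast
      ultimately have "elts (?s a (compose (elts (B a)) h l)) = elts (?s b (compose (elts (B b)) h r))"
        by simp
      thus "?s a (compose (elts (B a)) h l) = ?s b (compose (elts (B b)) h r)"
        using inj by (simp add: inj_eq)
    qed
  qed
  have small: "\<exists>a f. a \<in> elts A \<and> f \<in> elts (B a) \<rightarrow> elts x \<and> f ` elts (B a) = elts x"
    if "x \<in> elts H" for x
  proof -
    have "hsmall elts A B x" using Hiff[THEN iffD1, OF that] .
    hence "small_rel elts A B x" by (rule hs_cases[THEN conjunct1])
    thus ?thesis unfolding small_rel_def by blast
  qed
  have sub: "elts x \<subseteq> elts H" if "x \<in> elts H" for x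
  proof
    fix y assume y: "y \<in> elts x"
    have "hsmall elts A B x" using Hiff[THEN iffD1, OF that] .
    hence "\<forall>y\<in>elts x. hsmall elts A B y" by (rule hs_cases[THEN conjunct2])
    hence "hsmall elts A B y" using y by (rule bspec)
    thus "y \<in> elts H" by (rule Hiff[THEN iffD2])
  qed
  have init: "\<exists>!h. is_hom elts A B H ?s Y t h"
    if Yt: "is_alg elts A B Y t" "satisfies_all elts B Y t ?V ?E" for Y t
  proof -
    define P where "P x p \<longleftrightarrow> fst p \<in> elts A \<and> snd p \<in> elts (B (fst p)) \<rightarrow> elts x
         \<and> snd p ` elts (B (fst p)) = elts x" for x p
    define F where "F g x = (if x \<in> elts H then
        t (fst (SOME p. P x p)) (compose (elts (B (fst (SOME p. P x p)))) g (snd (SOME p. P x p)))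
        else undefined)" for g x
    define h where "h = wfrec {(x, y). x \<in> elts y} F"
    have Px: "P x (SOME p. P x p)" if "x \<in> elts H" for x
      using small[OF that] unfolding P_def by (metis (mono_tags, lifting) someI fst_conv snd_conv)
    have hdef: "h x = F h x" for x
    proof -
      have "h x = F (cut h {(x, y). x \<in> elts y} x) x"
        unfolding h_def by (rule wfrec[OF wfR])
      also have "\<dots> = F h x"
      proof (cases "x \<in> elts H")
        case True
        have "compose (elts (B (fst (SOME p. P x p)))) (cut h {(x, y). x \<in> elts y} x) (snd (SOME p. P x p))
            = compose (elts (B (fst (SOME p. P x p)))) h (snd (SOME p. P x p))"
          using Px[OF True] unfolding P_def compose_def cut_def
          by (auto intro!: restrict_ext)
        thus ?thesis unfolding F_def by simp
      qed (simp add: F_def)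
      finally show ?thesis .
    qed
    have hY: "h x \<in> elts Y" if "x \<in> elts H" for x
      using that
    proof (induction x rule: wf_induct_rule[OF wfR])
      case (1 x)
      have IH: "h y \<in> elts Y" if "y \<in> elts x" for y using 1 sub that by blast
      let ?p = "SOME p. P x p"
      have p: "P x ?p" by (rule Px[OF 1(2)])
      have "compose (elts (B (fst ?p))) h (snd ?p) \<in> elts (B (fst ?p)) \<rightarrow>\<^sub>E elts Y"
        using p IH unfolding P_def compose_def by auto
      hence "t (fst ?p) (compose (elts (B (fst ?p))) h (snd ?p)) \<in> elts Y"
        using Yt(1) p unfolding is_alg_def P_def by blast
      thus ?case using hdef 1(2) unfolding F_def by simp
    qed
    have hext: "h \<in> elts H \<rightarrow>\<^sub>E elts Y"
      using hY hdef unfolding F_def by auto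
    have hom: "is_hom elts A B H ?s Y t h"
      unfolding is_hom_def
    proof (intro conjI hext ballI)
      fix a f assume a: "a \<in> elts A" and f: "f \<in> elts (B a) \<rightarrow>\<^sub>E elts H"
      let ?x = "?s a f"
      have xH: "?x \<in> elts H" using sH a f by blast
      have e: "elts ?x = f ` elts (B a)" by (rule img_elts[OF zf])
      let ?p = "SOME p. P ?x p"
      have p: "P ?x ?p" by (rule Px[OF xH])
      have "h ?x = t (fst ?p) (compose (elts (B (fst ?p))) h (snd ?p))"
        using hdef xH unfolding F_def by simp
      also have "\<dots> = t a (compose (elts (B a)) h f)"
        by (rule wd[OF Yt(1) Yt(2), of "fst ?p" a _ "elts ?x"])
           (use p a e hY sub[OF xH] in \<open>auto simp: P_def\<close>)
      finally show "h ?x = t a (compose (elts (B a)) h f)" .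
    qed
    have uniq: "h1 = h2" if h1: "is_hom elts A B H ?s Y t h1" and h2: "is_hom elts A B H ?s Y t h2" for h1 h2
    proof
      fix x
      show "h1 x = h2 x"
      proof (cases "x \<in> elts H")
        case False thus ?thesis using h1 h2 unfolding is_hom_def by (auto simp: PiE_def extensional_def)
      next
        case True
        thus ?thesis
        proof (induction x rule: wf_induct_rule[OF wfR])
          case (1 x)
          have IH: "h1 y = h2 y" if "y \<in> elts x" for y using 1 sub that by blast
          obtain a f where a: "a \<in> elts A" and f: "f \<in> elts (B a) \<rightarrow> elts x" and fi: "f ` elts (B a) = elts x"
            using small[OF 1(2)] by blast
          define f' where "f' = restrict f (elts (B a))"
          have f'E: "f' \<in> elts (B a) \<rightarrow>\<^sub>E elts H" using f sub[OF 1(2)] unfolding f'_def by auto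
          have "elts (?s a f') = elts x" using fi by (simp add: img_elts[OF zf] f'_def)
          hence xs: "x = ?s a f'" using inj by (metis injD)
          have "compose (elts (B a)) h1 f' = compose (elts (B a)) h2 f'"
            using IH f unfolding compose_def f'_def by (auto intro!: restrict_ext simp: Pi_iff)
          thus ?case using h1 h2 a f'E xs unfolding is_hom_def by metis
        qed
      qed
    qed
    show ?thesis using hom uniq by blast
  qed
  show ?thesis unfolding initial_alg_def using alg sat init by blast
qed

end
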